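(* Let $q$ be an odd prime power and use the setting of the context. Then $\mathcal C=\pi^G$ is a $(6,(q^3-1)(q^2+q+1),4;3)_q$ constant-dimension subspace code; that is, $\mathcal C$ consists of exactly $(q^3-1)(q^2+q+1)$ planes of $\Sigma\cong{\rm PG}(5,q)$ and any two distinct planes of $\mathcal C$ meet in at most one point.
   Context: Let $\Sigma$ be the set of points $\langle(a,b,a^q,b^q,a^{q^2},b^{q^2})\rangle$ of ${\rm PG}(5,q^3)$, $a,b\in{\rm GF}(q^3)$, $(a,b)\ne(0,0)$; since these vectors form a $6$-dimensional ${\rm GF}(q)$-vector space, $\Sigma$ is a model of ${\rm PG}(5,q)$ whose planes correspond to its $3$-dimensional ${\rm GF}(q)$-subspaces. Points are column vectors. For $\eta\in{\rm GF}(q^3)\setminus\{0\}$ let $g_\eta$ be the projectivity with matrix ${\rm diag}(\eta^2,\eta^{q+1},\eta^{2q},\eta^{q^2+q},\eta^{2q^2},\eta^{q^2+1})$, and for $w\in{\rm GF}(q^3)\setminus\{0\}$ let $h_w$ be the projectivity with matrix ${\rm diag}(1,w,1,w^q,1,w^{q^2})$. Let $S=\{g_\eta\}$ (order $q^2+q+1$), $W=\{h_w\}$ (order $q^3-1$), and $G=S\times W$, of order $(q^3-1)(q^2+q+1)$. Let $\pi$ be the plane of $\Sigma$ consisting of the points $\langle(a,\frac{a+a^q}{2},a^q,\frac{a^q+a^{q^2}}{2},a^{q^2},\frac{a^{q^2}+a}{2})\rangle$, $a\in{\rm GF}(q^3)\setminus\{0\}$, and $\mathcal C=\pi^G=\{\pi^g:g\in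 G\}$. An $(n,M,4;3)_q$ constant-dimension code is a set of $M$ planes of ${\rm PG}(n-1,q)$ pairwise meeting in at most a point. *)

theory Defs
  imports "HOL-Computational_Algebra.Primes"
begin

text \<open>Vectors of GF(q^3)^6 are represented as functions nat => 'a, with
  coordinates 0..5 (all other coordinates are 0). A point of PG(5,q^3) is
  represented by the set of nonzero scalar multiples of a nonzero vector.\<close>

type_synonym 'a vec6 = "nat \<Rightarrow> 'a"
type_synonym 'a point = "'a vec6 set"

definition vec6 :: "'a::zero \<Rightarrow> 'a \<Rightarrow> 'a \<Rightarrow> 'a \<Rightarrow> 'a \<Rightarrow> 'a \<Rightarrow> 'a vec6" where
  "vec6 x0 x1 x2 x3 x4 x5 = (\<lambda>i. if i = 0 then x0 else if i = 1 then x1 else if i = 2 then x2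
      else if i = 3 then x3 else if i = 4 then x4 else if i = 5 then x5 else 0)"

definition proj :: "'a::field vec6 \<Rightarrow> 'a point" where
  "proj v = {(\<lambda>i. c * v i) | c. c \<noteq> 0}"

definition subfield :: "nat \<Rightarrow> 'a::field set" where
  "subfield q = {x. x ^ q = x}"

definition sigvec :: "nat \<Rightarrow> 'a::field \<Rightarrow> 'a \<Rightarrow> 'a vec6" where
  "sigvec q a b = vec6 a b (a ^ q) (b ^ q) (a ^ (q^2)) (b ^ (q^2))"

text \<open>Planes of Sigma: point sets coming from 3-dimensional GF(q)-subspaces of the
  GF(q)-space {(a,b)}; such a subspace is given by a GF(q)-basis u1,u2,u3.\<close>
definition sigma_plane :: "nat \<Rightarrow> 'a::field point set \<Rightarrow> bool" where
  "sigma_plane q P \<longleftrightarrow> (\<exists>a1 b1 a2 b2 a3 b3 :: 'a.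
     (\<forall>x1\<in>subfield q. \<forall>x2\<in>subfield q. \<forall>x3\<in>subfield q.
        x1 * a1 + x2 * a2 + x3 * a3 = 0 \<and> x1 * b1 + x2 * b2 + x3 * b3 = 0
        \<longrightarrow> x1 = 0 \<and> x2 = 0 \<and> x3 = 0) \<and>
     P = {proj (sigvec q (x1 * a1 + x2 * a2 + x3 * a3) (x1 * b1 + x2 * b2 + x3 * b3)) | x1 x2 x3.
            x1 \<in> subfield q \<and> x2 \<in> subfield q \<and> x3 \<in> subfield q \<and>
            (x1 * a1 + x2 * a2 + x3 * a3, x1 * b1 + x2 * b2 + x3 * b3) \<noteq> (0, 0)})"

text \<open>Diagonal matrices, given by their diagonal entries, acting on points.\<close>
definition diag_g :: "nat \<Rightarrow> 'a::field \<Rightarrow> 'a vec6" where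
  "diag_g q \<eta> = vec6 (\<eta>^2) (\<eta>^(q+1)) (\<eta>^(2*q)) (\<eta>^(q^2+q)) (\<eta>^(2*q^2)) (\<eta>^(q^2+1))"

definition diag_h :: "nat \<Rightarrow> 'a::field \<Rightarrow> 'a vec6" where
  "diag_h q w = vec6 1 w 1 (w ^ q) 1 (w ^ (q^2))"

definition diag_act :: "'a::field vec6 \<Rightarrow> 'a point \<Rightarrow> 'a point" where
  "diag_act d P = (\<lambda>v. (\<lambda>i. d i * v i)) ` P"

definition groupG :: "nat \<Rightarrow> 'a::field vec6 set" where
  "groupG q = {(\<lambda>i. diag_g q \<eta> i * diag_h q w i) | \<eta> w. \<eta> \<noteq> 0 \<and> w \<noteq> 0}"

definition plane_pi :: "nat \<Rightarrow> 'a::field point set" where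
  "plane_pi q = {proj (vec6 a ((a + a^q) / 2) (a^q) ((a^q + a^(q^2)) / 2) (a^(q^2)) ((a^(q^2) + a) / 2))
                 | a. a \<noteq> 0}"

definition codeC :: "nat \<Rightarrow> 'a::field point set set" where
  "codeC q = {diag_act d ` plane_pi q | d. d \<in> groupG q}"

end

theory Submission
  imports Defs "HOL-Number_Theory.Residues" "HOL-Computational_Algebra.Polynomial"
begin

lemma root_bound:
  fixes c :: "'a::field"
  assumes "n \<ge> 1"
  shows "card {x. x ^ n = c} \<le> n"
proof -
  define P where "P = monom (1::'a) n - [:c:]"
  have ev: "poly P x = x ^ n - c" for x by (simp add: P_def poly_monom)
  have "coeff P n = 1" using assms by (cases n) (auto simp: P_def coeff_monom)
  hence nz: "P \<noteq> 0" by auto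
  have deg: "degree P \<le> n" unfolding P_def
    by (metis degree_diff_le degree_monom_le degree_pCons_0 le0)
  have "{x. x ^ n = c} = {x. poly P x = 0}" by (auto simp: ev)
  thus ?thesis using card_poly_roots_bound[OF nz] deg by simp
qed

definition phi :: "nat \<Rightarrow> 'a::field \<Rightarrow> 'a \<Rightarrow> 'a \<Rightarrow> 'a" where
  "phi q l w a = w * (l * a + a ^ q / l) / 2"

definition planeF :: "nat \<Rightarrow> 'a::field \<Rightarrow> 'a \<Rightarrow> 'a point set" where
  "planeF q l w = {proj (sigvec q a (phi q l w a)) | a. a \<noteq> 0}"

lemma proj_smult:
  fixes c :: "'a::field"
  assumes "c \<noteq> 0"
  shows "proj (\<lambda>i. c * v i) = proj v"
proof
  show "proj (\<lambda>i. c * v i) \<subseteq> proj v"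
  proof
    fix x assume "x \<in> proj (\<lambda>i. c * v i)"
    then obtain d where d: "d \<noteq> 0" "x = (\<lambda>i. d * (c * v i))" by (auto simp: proj_def)
    hence "x = (\<lambda>i. (d * c) * v i)" by (simp add: mult.assoc)
    thus "x \<in> proj v" using d assms by (auto simp: proj_def)
  qed
  show "proj v \<subseteq> proj (\<lambda>i. c * v i)"
  proof
    fix x assume "x \<in> proj v"
    then obtain d where d: "d \<noteq> 0" "x = (\<lambda>i. d * v i)" by (auto simp: proj_def)
    hence x': "x = (\<lambda>i. (d / c) * (c * v i))" using assms by simp
    have "d / c \<noteq> 0" using d assms by simp
    thus "x \<in> proj (\<lambda>i. c * v i)" using x' unfolding proj_def by blast
  qed
qed

lemma proj_self: "(v :: 'a::field vec6) \<in> proj v"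
proof -
  have "v = (\<lambda>i. 1 * v i)" by simp
  thus ?thesis unfolding proj_def by (intro CollectI exI[of _ 1]) simp
qed

lemma proj_eqD:
  assumes "proj u = proj (v :: 'a::field vec6)"
  shows "\<exists>c. c \<noteq> 0 \<and> u = (\<lambda>i. c * v i)"
proof -
  have "u \<in> proj v" using proj_self[of u] assms by simp
  thus ?thesis unfolding proj_def by auto
qed

lemma diag_act_proj: "diag_act d (proj v) = proj (\<lambda>i. d i * (v::'a::field vec6) i)"
proof
  show "diag_act d (proj v) \<subseteq> proj (\<lambda>i. d i * v i)"
  proof
    fix x assume "x \<in> diag_act d (proj v)"
    then obtain c where c: "c \<noteq> 0" "x = (\<lambda>i. d i * (c * v i))"
      unfolding diag_act_def proj_def by blast
    hence "x = (\<lambda>i. c * (d i * v i))" by (simp add: mult.left_commute)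
    thus "x \<in> proj (\<lambda>i. d i * v i)" unfolding proj_def using c(1) by blast
  qed
  show "proj (\<lambda>i. d i * v i) \<subseteq> diag_act d (proj v)"
  proof
    fix x assume "x \<in> proj (\<lambda>i. d i * v i)"
    then obtain c where c: "c \<noteq> 0" "x = (\<lambda>i. c * (d i * v i))"
      unfolding proj_def by blast
    have y: "(\<lambda>i. c * v i) \<in> proj v" unfolding proj_def using c(1) by blast
    have "x = (\<lambda>v i. d i * v i) (\<lambda>i. c * v i)" using c(2) by (simp add: mult.left_commute)
    thus "x \<in> diag_act d (proj v)" unfolding diag_act_def using y by (rule image_eqI)
  qed
qed

lemma sigvec_at:
  "sigvec q a b 0 = a" "sigvec q a b 1 = b" "sigvec q a b 2 = a ^ q"
  "sigvec q a b 3 = b ^ q" "sigvec q a b 4 = a ^ (q^2)" "sigvec q a b 5 = b ^ (q^2)"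
  by (simp_all add: sigvec_def vec6_def)

lemma in_planeF: "X \<in> planeF q l w \<longleftrightarrow> (\<exists>a. a \<noteq> 0 \<and> X = proj (sigvec q a (phi q l w a)))"
  by (auto simp: planeF_def)

lemma gen1: "(y::'a::field) \<noteq> 0 \<Longrightarrow> x * y * z / y = x * z"
  by simp

lemma gen2: "(L::'a::field) * E = P \<Longrightarrow> Y = P * Aq \<Longrightarrow> w * (L * (E * a) + Y) / 2 = P * w * ((a + Aq) / 2)"
proof -
  assume "L * E = P" "Y = P * Aq"
  hence "w * (L * (E * a) + Y) = P * w * (a + Aq)" by (simp add: algebra_simps)
  thus ?thesis by simp
qed

lemma mem_planeF: "(a::'a::field) \<noteq> 0 \<Longrightarrow> proj (sigvec q a (phi q l w a)) \<in> planeF q l w"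
  unfolding planeF_def by blast

locale ctx =
  fixes q :: nat and T :: "'a::{field,finite} itself"
  assumes cardF: "card (UNIV::'a set) = q ^ 3"
    and oddq: "odd q"
    and ppow: "\<exists>p k. prime p \<and> k > 0 \<and> q = p ^ k"
begin

lemma q_ge3: "q \<ge> 3"
proof -
  obtain p k where pk: "prime p" "k > 0" "q = p ^ k" using ppow by blast
  have p2: "p \<ge> 2" using pk prime_ge_2_nat by blast
  have "p \<le> p ^ k" using pk(2) p2 by (simp add: self_le_power)
  hence "q \<ge> 2" using pk p2 by linarith
  moreover have "q \<noteq> 2" using oddq by auto
  ultimately show ?thesis by linarith
qed

lemma char_facts: "\<exists>k. q = CHAR('a) ^ k \<and> odd (CHAR('a))"
proof -
  obtain p k where pk: "prime p" "k > 0" "q = p ^ k" using ppow by blast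
  have "CHAR('a) > 0" by (rule finite_imp_CHAR_pos) simp
  hence pc: "prime CHAR('a)" by (rule prime_CHAR_semidom)
  have "CHAR('a) dvd p ^ (k*3)" using CHAR_dvd_CARD[where 'a='a] cardF pk
    by (simp add: power_mult)
  hence "CHAR('a) dvd p" using pc prime_dvd_power by blast
  hence eq: "CHAR('a) = p" using pc pk primes_dvd_imp_eq by blast
  have "odd p" using oddq pk by auto
  thus ?thesis using eq pk by blast
qed

lemma prime_char: "prime CHAR('a)"
  by (rule prime_CHAR_semidom, rule finite_imp_CHAR_pos) simp

lemma frob_add: "((x::'a) + y) ^ q = x ^ q + y ^ q"
  using char_facts freshmans_dream' prime_char by blast

lemma frob2_add: "((x::'a) + y) ^ (q^2) = x ^ (q^2) + y ^ (q^2)"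
proof -
  obtain k where "q = CHAR('a) ^ k" using char_facts by blast
  hence "q^2 = CHAR('a) ^ (k*2)" by (simp add: power_mult)
  thus ?thesis using freshmans_dream' prime_char by blast
qed

lemma two_nz: "(2::'a) \<noteq> 0"
proof
  assume "(2::'a) = 0"
  hence "of_nat 2 = (0::'a)" by simp
  hence d: "CHAR('a) dvd 2" by (simp only: of_nat_eq_0_iff_char_dvd)
  have "CHAR('a) \<ge> 2" using prime_char prime_ge_2_nat by blast
  moreover have "CHAR('a) \<le> 2" using d dvd_imp_le by simp
  ultimately have "CHAR('a) = 2" by simp
  moreover have "odd (CHAR('a))" using char_facts by blast
  ultimately show False by simp
qed

lemma two_pow: "(2::'a) ^ q = 2"
proof -
  have "(1 + 1::'a)^q = 1^q + 1^q" by (rule frob_add)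
  thus ?thesis by (simp only: one_add_one power_one)
qed

lemma frob_minus: "((x::'a) - y) ^ q = x ^ q - y ^ q"
proof -
  have "(x + (-y))^q = x^q + (-y)^q" by (rule frob_add)
  moreover have "(-y)^q = -(y^q)" using oddq by (rule power_minus_odd)
  ultimately show ?thesis by simp
qed

lemma pow_card: "(x::'a) ^ (q^3) = x"
proof (cases "x = 0")
  case False
  have "x * (\<Prod>y\<in>UNIV-{0}. x * y) = x * x ^ (card (UNIV :: 'a set) - 1) * \<Prod>(UNIV-{0})"
    by (simp add: prod.distrib mult_ac)
  also have "x * x ^ (card (UNIV :: 'a set) - 1) = x ^ Suc (card (UNIV :: 'a set) - 1)"
    by (subst power_Suc) auto
  also have "Suc (card (UNIV :: 'a set) - 1) = card (UNIV :: 'a set)"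
    using finite_UNIV_card_ge_0[where ?'a = 'a] by simp
  also have "(\<Prod>y\<in>UNIV-{0}. x * y) = (\<Prod>y\<in>UNIV-{0}. y)"
    by (rule prod.reindex_bij_witness[of _ "\<lambda>y. y / x" "\<lambda>y. x * y"]) (use False in auto)
  finally show ?thesis
    using cardF by simp
qed (use q_ge3 in auto)

lemma pow_cardm1: "(x::'a) \<noteq> 0 \<Longrightarrow> x ^ (q^3 - 1) = 1"
proof -
  assume x: "x \<noteq> 0"
  have "q^3 > 0" using q_ge3 by simp
  hence "Suc (q^3 - 1) = q^3" by simp
  hence "x * x ^ (q^3 - 1) = x ^ (q^3)" by (metis power_Suc)
  also have "... = x * 1" using pow_card by simp
  finally show ?thesis using x by simp
qed

lemma point_eq:
  fixes a b a' b' :: 'a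
  assumes "a \<noteq> 0" "proj (sigvec q a' b') = proj (sigvec q a b)"
  shows "\<exists>c. c \<noteq> 0 \<and> c ^ q = c \<and> a' = c * a \<and> b' = c * b"
proof -
  obtain c where c: "c \<noteq> 0" "sigvec q a' b' = (\<lambda>i. c * sigvec q a b i)"
    using proj_eqD[OF assms(2)] by blast
  have e0: "a' = c * a" using fun_cong[OF c(2), of 0] by (simp add: sigvec_def vec6_def)
  have e1: "b' = c * b" using fun_cong[OF c(2), of 1] by (simp add: sigvec_def vec6_def)
  have e2: "a' ^ q = c * a ^ q" using fun_cong[OF c(2), of 2] by (simp add: sigvec_def vec6_def)
  have "c ^ q * a ^ q = c * a ^ q" using e0 e2 by (simp add: power_mult_distrib)
  moreover have "a ^ q \<noteq> 0" using assms(1) by simp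
  ultimately have "c ^ q = c" using assms(1) by simp
  thus ?thesis using c e0 e1 by blast
qed

lemma pow_q2_fix: "(c::'a) ^ q = c \<Longrightarrow> c ^ (q^2) = c"
  by (simp add: power2_eq_square power_mult)

lemma point_scale:
  fixes a b c :: 'a
  assumes "c \<noteq> 0" "c ^ q = c"
  shows "proj (sigvec q (c * a) (c * b)) = proj (sigvec q a b)"
proof -
  have c2: "c ^ (q^2) = c" using assms(2) by (rule pow_q2_fix)
  have "sigvec q (c * a) (c * b) = (\<lambda>i. c * sigvec q a b i)"
    unfolding sigvec_def vec6_def using assms(2) c2 by (auto simp: power_mult_distrib)
  thus ?thesis using proj_smult[OF assms(1)] by simp
qed

lemma phi_scale: "(c::'a) ^ q = c \<Longrightarrow> phi q l w (c * a) = c * phi q l w a"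
  by (simp add: phi_def power_mult_distrib algebra_simps)

lemma phi_add: "phi q l w ((a::'a) + b) = phi q l w a + phi q l w b"
  by (simp add: phi_def frob_add algebra_simps add_divide_distrib)

lemma phi_diff: "phi q l w (x::'a) - phi q m v x = ((w*l - v*m)/2) * x + ((w/l - v/m)/2) * x^q"
  by (simp add: phi_def algebra_simps diff_divide_distrib add_divide_distrib)

lemma common_point:
  assumes "X \<in> planeF q l w" "X \<in> planeF q m (v::'a)"
  shows "\<exists>a. a \<noteq> 0 \<and> X = proj (sigvec q a (phi q l w a)) \<and> phi q l w a = phi q m v a"
proof -
  obtain a where a: "a \<noteq> 0" "X = proj (sigvec q a (phi q l w a))" using assms(1) in_planeF by blast
  obtain a' where a': "a' \<noteq> 0" "X = proj (sigvec q a' (phi q m v a'))" using assms(2) in_planeF by blast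
  obtain c where c: "c \<noteq> 0" "c ^ q = c" "a' = c * a" "phi q m v a' = c * phi q l w a"
    using point_eq[OF a(1), of a' "phi q m v a'"] a a' by metis
  have "c * phi q m v a = c * phi q l w a" using c phi_scale by metis
  hence "phi q m v a = phi q l w a" using c(1) by simp
  thus ?thesis using a by metis
qed

lemma inter_le1:
  assumes ne: "planeF q l w \<noteq> planeF q m (v::'a)"
  shows "card (planeF q l w \<inter> planeF q m v) \<le> 1"
proof -
  define I where "I = planeF q l w \<inter> planeF q m v"
  define \<alpha> where "\<alpha> = (w*l - v*m)/2"
  define \<beta> where "\<beta> = (w/l - v/m)/2"
  have D: "phi q l w x - phi q m v x = \<alpha> * x + \<beta> * x^q" for x
    unfolding \<alpha>_def \<beta>_def by (rule phi_diff)
  have all_eq: "X = Y" if X: "X \<in> I" and Y: "Y \<in> I" for X Y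
  proof -
    obtain a where a: "a \<noteq> 0" "X = proj (sigvec q a (phi q l w a))" "phi q l w a = phi q m v a"
      using common_point X unfolding I_def by blast
    obtain b where b: "b \<noteq> 0" "Y = proj (sigvec q b (phi q l w b))" "phi q l w b = phi q m v b"
      using common_point Y unfolding I_def by blast
    have ea: "\<alpha> * a + \<beta> * a^q = 0" using D[of a] a(3) by simp
    have eb: "\<alpha> * b + \<beta> * b^q = 0" using D[of b] b(3) by simp
    show "X = Y"
    proof (cases "\<beta> = 0")
      case True
      hence "\<alpha> = 0" using ea a(1) by simp
      hence "phi q l w x = phi q m v x" for x using D[of x] True by simp
      hence "planeF q l w = planeF q m v" unfolding planeF_def by simp
      thus ?thesis using ne by simp
    next
      case False
      have "\<beta> * (a^q * b - b^q * a) = (\<alpha> * a + \<beta> * a^q) * b - (\<alpha> * b + \<beta> * b^q) * a"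
        by (simp add: algebra_simps)
      also have "... = 0" using ea eb by simp
      finally have "a^q * b = b^q * a" using False by simp
      define c where "c = b / a"
      have cq: "c ^ q = c" unfolding c_def using \<open>a^q * b = b^q * a\<close> a(1)
        by (simp add: power_divide field_simps)
      have cnz: "c \<noteq> 0" unfolding c_def using a(1) b(1) by simp
      have bc: "b = c * a" unfolding c_def using a(1) by simp
      have "Y = proj (sigvec q (c * a) (c * phi q l w a))" using b(2) bc phi_scale[OF cq] by simp
      also have "... = X" using point_scale[OF cnz cq] a(2) by simp
      finally show ?thesis by simp
    qed
  qed
  show ?thesis
  proof (cases "finite I")
    case True
    thus ?thesis using all_eq card_le_Suc0_iff_eq[OF True] unfolding I_def by simp
  next
    case False
    thus ?thesis unfolding I_def by simp
  qed
qed

lemma pow_q_split: "(x::'a) ^ q = x * x ^ (q - 1)"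
proof -
  have "Suc (q - 1) = q" using q_ge3 by simp
  thus ?thesis by (metis power_Suc)
qed

lemma cube_id: "(q - 1) * (q^2 + q + 1) = q^3 - 1"
proof -
  obtain n where n: "q = Suc n" using q_ge3 by (cases q) auto
  show ?thesis unfolding n by (simp add: power3_eq_cube power2_eq_square algebra_simps)
qed

definition Lam :: "'a set" where "Lam = (\<lambda>\<eta>. \<eta> ^ (q - 1)) ` {\<eta>. \<eta> \<noteq> 0}"

definition fib :: "'a \<Rightarrow> 'a set" where "fib l = {\<eta>. \<eta> \<noteq> 0 \<and> \<eta> ^ (q - 1) = l}"

lemma Lam_nz: "l \<in> Lam \<Longrightarrow> l \<noteq> 0"
  unfolding Lam_def by auto

lemma Lam_norm: "l \<in> Lam \<Longrightarrow> l ^ (q^2 + q + 1) = 1"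
proof -
  assume "l \<in> Lam"
  then obtain \<eta> where e: "\<eta> \<noteq> 0" "l = \<eta> ^ (q - 1)" unfolding Lam_def by auto
  have "l ^ (q^2 + q + 1) = \<eta> ^ ((q - 1) * (q^2 + q + 1))" by (simp only: e(2) power_mult)
  also have "... = \<eta> ^ (q^3 - 1)" by (simp only: cube_id)
  also have "... = 1" using pow_cardm1 e(1) by simp
  finally show ?thesis .
qed

lemma Lam_div: "l \<in> Lam \<Longrightarrow> m \<in> Lam \<Longrightarrow> l / m \<in> Lam"
proof -
  assume "l \<in> Lam" "m \<in> Lam"
  then obtain a b where "a \<noteq> 0" "l = a ^ (q - 1)" "b \<noteq> 0" "m = b ^ (q - 1)" unfolding Lam_def by auto
  hence "l / m = (a / b) ^ (q - 1)" "a / b \<noteq> 0" by (simp_all add: power_divide)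
  thus ?thesis unfolding Lam_def by blast
qed

lemma card_Lam_and_K: "card Lam = q^2 + q + 1 \<and> card (subfield q :: 'a set) = q"
proof -
  have q1: "q - 1 \<ge> 1" using q_ge3 by simp
  have finL: "finite Lam" by simp
  have fib_le: "card (fib l) \<le> q - 1" for l
  proof -
    have "fib l \<subseteq> {x. x ^ (q - 1) = l}" unfolding fib_def by auto
    hence "card (fib l) \<le> card {x. x ^ (q - 1) = l}" by (intro card_mono) simp_all
    also have "... \<le> q - 1" using root_bound q1 by blast
    finally show ?thesis .
  qed
  have U: "UNIV - {0} = (\<Union>l\<in>Lam. fib l)" unfolding Lam_def fib_def by auto
  have "card (UNIV - {0::'a}) = q^3 - 1" using cardF by (simp add: card_Diff_singleton)
  hence sumeq: "(\<Sum>l\<in>Lam. card (fib l)) = q^3 - 1"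
    using U card_UN_disjoint[of Lam fib] unfolding fib_def by (simp add: disjoint_iff) 
  have "(\<Sum>l\<in>Lam. card (fib l)) \<le> card Lam * (q - 1)"
    using sum_bounded_above[of Lam "\<lambda>l. card (fib l)" "q - 1"] fib_le by simp
  hence lo: "(q - 1) * (q^2 + q + 1) \<le> (q - 1) * card Lam" using sumeq cube_id by (simp add: mult.commute)
  have "Lam \<subseteq> {x. x ^ (q^2 + q + 1) = 1}" using Lam_norm by auto
  hence "card Lam \<le> card {x::'a. x ^ (q^2 + q + 1) = 1}" by (intro card_mono) simp_all
  also have "... \<le> q^2 + q + 1" by (rule root_bound) simp
  finally have up: "card Lam \<le> q^2 + q + 1" .
  have cL: "card Lam = q^2 + q + 1" using lo up q1 by (metis le_antisym mult_le_cancel1 not_one_le_zero zero_less_iff_neq_zero)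
  have oneL: "1 \<in> Lam" unfolding Lam_def by (rule image_eqI[of _ _ 1]) simp_all
  have f1: "card (fib 1) = q - 1"
  proof (rule ccontr)
    assume "card (fib 1) \<noteq> q - 1"
    hence lt: "card (fib 1) < q - 1" using fib_le[of 1] by simp
    have "(\<Sum>l\<in>Lam. card (fib l)) < (\<Sum>l\<in>Lam. q - 1)"
      by (rule sum_strict_mono_ex1) (use fib_le lt oneL in auto)
    also have "... = (q - 1) * (q^2 + q + 1)" using cL by simp
    finally show False using sumeq cube_id by simp
  qed
  have "subfield q = insert 0 (fib 1)"
  proof -
    have "x ^ q = x \<longleftrightarrow> x = 0 \<or> (x \<noteq> 0 \<and> x ^ (q - 1) = 1)" for x :: 'a
      using pow_q_split[of x] q_ge3 by auto
    thus ?thesis unfolding subfield_def fib_def by auto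
  qed
  hence "card (subfield q :: 'a set) = Suc (q - 1)"
    using f1 by (simp add: card_insert_if fib_def)
  hence "card (subfield q :: 'a set) = q" using q_ge3 by simp
  thus ?thesis using cL by simp
qed

definition vpi :: "'a \<Rightarrow> 'a vec6" where
  "vpi a = vec6 a ((a + a^q) / 2) (a^q) ((a^q + a^(q^2)) / 2) (a^(q^2)) ((a^(q^2) + a) / 2)"

lemma plane_pi_eq: "plane_pi q = {proj (vpi a) | a. a \<noteq> 0}"
  unfolding plane_pi_def vpi_def by simp

lemma act_vec:
  fixes \<eta> w a :: 'a
  assumes e: "\<eta> \<noteq> 0"
  shows "(\<lambda>i. (diag_g q \<eta> i * diag_h q w i) * vpi a i)
       = sigvec q (\<eta>^2 * a) (phi q (\<eta>^(q-1)) w (\<eta>^2 * a))"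
proof -
  define B where "B = phi q (\<eta>^(q-1)) w (\<eta>^2 * a)"
  have h1: "\<eta>^(q-1) * \<eta>^2 = \<eta>^(q+1)"
  proof -
    have "q - 1 + 2 = q + 1" using q_ge3 by simp
    thus ?thesis by (metis power_add)
  qed
  have h2: "\<eta>^(2*q) = \<eta>^(q+1) * \<eta>^(q-1)"
  proof -
    have "q + 1 + (q - 1) = 2 * q" using q_ge3 by simp
    thus ?thesis by (metis power_add)
  qed
  have enz: "\<eta>^(q-1) \<noteq> 0" using e by simp
  have c2: "(\<eta>^2 * a)^q = \<eta>^(2*q) * a^q" by (simp only: power_mult_distrib power_mult)
  have "(\<eta>^2 * a)^q / \<eta>^(q-1) = \<eta>^(q+1) * a^q"
    unfolding c2 h2 by (rule gen1[OF enz])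
  hence B: "B = \<eta>^(q+1) * w * ((a + a^q) / 2)"
    unfolding B_def phi_def by (rule gen2[OF h1])
  have aqq: "(a^q)^q = a^(q^2)" by (simp add: power2_eq_square power_mult)
  have Bq: "B^q = \<eta>^(q^2+q) * w^q * ((a^q + a^(q^2)) / 2)"
  proof -
    have "B^q = (\<eta>^(q+1))^q * w^q * ((a + a^q)^q / 2^q)" unfolding B by (simp add: power_mult_distrib power_divide)
    also have "(a + a^q)^q = a^q + a^(q^2)" using frob_add aqq by simp
    also have "(\<eta>^(q+1))^q = \<eta>^(q^2+q)"
    proof -
      have pe: "(q+1)*q = q^2+q" by (simp add: power2_eq_square algebra_simps)
      show ?thesis by (simp only: power_mult[symmetric] pe)
    qed
    finally show ?thesis using two_pow by simp
  qed
  have two2: "(2::'a)^(q^2) = 2" using two_pow by (simp add: power2_eq_square power_mult)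
  have a3: "(a^q)^(q^2) = a" using pow_card by (simp add: power_mult[symmetric] power3_eq_cube power2_eq_square mult.commute)
  have e3: "(\<eta>^(q+1))^(q^2) = \<eta>^(q^2+1)"
  proof -
    have "(\<eta>^(q+1))^(q^2) = \<eta>^(q^3) * \<eta>^(q^2)"
      by (simp add: power_mult[symmetric] power_add[symmetric] power3_eq_cube power2_eq_square algebra_simps)
    thus ?thesis using pow_card by (simp add: power_add)
  qed
  have Bqq: "B^(q^2) = \<eta>^(q^2+1) * w^(q^2) * ((a^(q^2) + a) / 2)"
  proof -
    have "B^(q^2) = (\<eta>^(q+1))^(q^2) * w^(q^2) * ((a + a^q)^(q^2) / 2^(q^2))" unfolding B by (simp add: power_mult_distrib power_divide)
    also have "(a + a^q)^(q^2) = a^(q^2) + a" using frob2_add a3 by simp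
    finally show ?thesis using two2 e3 by simp
  qed
  have c4: "(\<eta>^2 * a)^(q^2) = \<eta>^(2*q^2) * a^(q^2)" by (simp only: power_mult_distrib power_mult)
  show ?thesis
    unfolding B_def[symmetric]
  proof
    fix i
    show "(diag_g q \<eta> i * diag_h q w i) * vpi a i = sigvec q (\<eta>^2 * a) B i"
      unfolding diag_g_def diag_h_def vpi_def sigvec_def vec6_def
      using B Bq Bqq c2 c4 two_nz by (simp add: mult.assoc)
  qed
qed

lemma act_pi:
  fixes \<eta> w :: 'a
  assumes e: "\<eta> \<noteq> 0"
  shows "diag_act (\<lambda>i. diag_g q \<eta> i * diag_h q w i) ` plane_pi q = planeF q (\<eta>^(q-1)) w"
proof -
  let ?d = "\<lambda>i. diag_g q \<eta> i * diag_h q w i"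
  have img: "diag_act ?d (proj (vpi a)) = proj (sigvec q (\<eta>^2 * a) (phi q (\<eta>^(q-1)) w (\<eta>^2 * a)))" for a
    using diag_act_proj[of ?d "vpi a"] act_vec[OF e, of w a] by simp
  have e2: "\<eta>^2 \<noteq> 0" using e by simp
  show ?thesis
  proof
    show "diag_act ?d ` plane_pi q \<subseteq> planeF q (\<eta>^(q-1)) w"
    proof
      fix X assume "X \<in> diag_act ?d ` plane_pi q"
      then obtain a where a: "a \<noteq> 0" "X = diag_act ?d (proj (vpi a))" unfolding plane_pi_eq by blast
      have "\<eta>^2 * a \<noteq> 0" using a e2 by simp
      thus "X \<in> planeF q (\<eta>^(q-1)) w" unfolding in_planeF using a(2) img by blast
    qed
    show "planeF q (\<eta>^(q-1)) w \<subseteq> diag_act ?d ` plane_pi q"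
    proof
      fix X assume "X \<in> planeF q (\<eta>^(q-1)) w"
      then obtain b where b: "b \<noteq> 0" "X = proj (sigvec q b (phi q (\<eta>^(q-1)) w b))" unfolding in_planeF by blast
      define a where "a = b / \<eta>^2"
      have ab: "\<eta>^2 * a = b" unfolding a_def using e2 by simp
      have anz: "a \<noteq> 0" unfolding a_def using b(1) e2 by simp
      have "X = diag_act ?d (proj (vpi a))" using img[of a] ab b(2) by simp
      moreover have "proj (vpi a) \<in> plane_pi q" unfolding plane_pi_eq using anz by blast
      ultimately show "X \<in> diag_act ?d ` plane_pi q" by blast
    qed
  qed
qed

lemma codeC_eq: "codeC q = (\<lambda>(l, w). planeF q l w) ` (Lam \<times> {w::'a. w \<noteq> 0})"
proof
  show "codeC q \<subseteq> (\<lambda>(l, w). planeF q l w) ` (Lam \<times> {w::'a. w \<noteq> 0})"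
  proof
    fix P assume "P \<in> (codeC q :: 'a point set set)"
    then obtain \<eta> w :: 'a where ew: "\<eta> \<noteq> 0" "w \<noteq> 0"
      "P = diag_act (\<lambda>i. diag_g q \<eta> i * diag_h q w i) ` plane_pi q"
      unfolding codeC_def groupG_def by blast
    hence "P = planeF q (\<eta>^(q-1)) w" using act_pi by simp
    moreover have "\<eta>^(q-1) \<in> Lam" unfolding Lam_def using ew(1) by blast
    ultimately show "P \<in> (\<lambda>(l, w). planeF q l w) ` (Lam \<times> {w::'a. w \<noteq> 0})" using ew(2) by force
  qed
  show "(\<lambda>(l, w). planeF q l w) ` (Lam \<times> {w::'a. w \<noteq> 0}) \<subseteq> codeC q"
  proof
    fix P assume "P \<in> (\<lambda>(l, w). planeF q l w) ` (Lam \<times> {w::'a. w \<noteq> 0})"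
    then obtain l w where lw: "l \<in> Lam" "w \<noteq> 0" "P = planeF q l w" by blast
    then obtain \<eta> where e: "\<eta> \<noteq> 0" "l = \<eta>^(q-1)" unfolding Lam_def by blast
    have "P = diag_act (\<lambda>i. diag_g q \<eta> i * diag_h q w i) ` plane_pi q" using act_pi[OF e(1)] e lw by simp
    moreover have "(\<lambda>i. diag_g q \<eta> i * diag_h q w i) \<in> groupG q" unfolding groupG_def using e lw by blast
    ultimately show "P \<in> codeC q" unfolding codeC_def by blast
  qed
qed

abbreviation K :: "'a set" where "K \<equiv> subfield q"

lemma K_add: "x \<in> K \<Longrightarrow> y \<in> K \<Longrightarrow> x + y \<in> K"
  unfolding subfield_def using frob_add by simp
lemma K_minus: "x \<in> K \<Longrightarrow> y \<in> K \<Longrightarrow> x - y \<in> K"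
  unfolding subfield_def using frob_minus by simp
lemma K_uminus: "x \<in> K \<Longrightarrow> - x \<in> K"
  unfolding subfield_def using oddq by simp
lemma K_div: "x \<in> K \<Longrightarrow> y \<in> K \<Longrightarrow> x / y \<in> K"
  unfolding subfield_def by (simp add: power_divide)
lemma K_mult: "x \<in> K \<Longrightarrow> y \<in> K \<Longrightarrow> x * y \<in> K"
  unfolding subfield_def by (simp add: power_mult_distrib)

lemma basis:
  "\<exists>a2 a3 :: 'a. (\<forall>x1\<in>K. \<forall>x2\<in>K. \<forall>x3\<in>K. x1 * 1 + x2 * a2 + x3 * a3 = 0 \<longrightarrow> x1 = 0 \<and> x2 = 0 \<and> x3 = 0)
     \<and> (\<forall>a. \<exists>x1\<in>K. \<exists>x2\<in>K. \<exists>x3\<in>K. a = x1 * 1 + x2 * a2 + x3 * a3)"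
proof -
  have cK: "card K = q" using card_Lam_and_K by simp
  have q9: "9 \<le> q * q" using mult_le_mono[OF q_ge3 q_ge3] by simp
  have qq1: "q * 1 < q * (q * q)" using q9 q_ge3 by (intro mult_strict_left_mono) simp_all
  have qq2: "(q * q) * 1 < (q * q) * q" using q9 q_ge3 by (intro mult_strict_left_mono) simp_all
  have qq: "q < q^3" "q * q < q^3" using qq1 qq2 by (simp_all add: power3_eq_cube mult.assoc)
  have "K \<noteq> UNIV" using cK cardF qq by auto
  then obtain a2 where a2: "a2 \<notin> K" by blast
  define S2 where "S2 = (\<lambda>(x, y). x + y * a2) ` (K \<times> K)"
  have "card S2 \<le> card (K \<times> K)" unfolding S2_def by (rule card_image_le) simp
  also have "... = q * q" using cK by (simp add: card_cartesian_product)
  finally have "card S2 < q^3" using qq by simp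
  hence "S2 \<noteq> UNIV" using cardF by auto
  then obtain a3 where a3: "a3 \<notin> S2" by blast
  have indep: "x = 0 \<and> y = 0 \<and> z = 0" if xyz: "x \<in> K" "y \<in> K" "z \<in> K" and eq: "x * 1 + y * a2 + z * a3 = 0" for x y z
  proof -
    have z: "z = 0"
    proof (rule ccontr)
      assume "z \<noteq> 0"
      have "z * a3 + (x + y * a2) = 0" by (metis add.commute eq mult_1_right)
      hence "z * a3 = 0 - (x + y * a2)" by (simp only: eq_diff_eq)
      hence za: "z * a3 = - x - y * a2" by (simp add: algebra_simps)
      have "a3 = (z * a3) / z" using \<open>z \<noteq> 0\<close> by simp
      also have "... = (- x / z) + (- y / z) * a2" unfolding za by (simp add: diff_divide_distrib)
      finally have "a3 = (- x / z) + (- y / z) * a2" .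
      moreover have "- x / z \<in> K" "- y / z \<in> K" using xyz by (simp_all add: K_div K_uminus)
      ultimately have "a3 \<in> S2" unfolding S2_def by force
      thus False using a3 by simp
    qed
    have y: "y = 0"
    proof (rule ccontr)
      assume "y \<noteq> 0"
      have "y * a2 + x = 0" using eq z by (metis add.commute add_0_right mult_1_right mult_zero_left)
      hence "y * a2 = 0 - x" by (simp only: eq_diff_eq)
      hence ya: "y * a2 = - x" by simp
      have "a2 = (y * a2) / y" using \<open>y \<noteq> 0\<close> by simp
      hence "a2 = - x / y" unfolding ya .
      moreover have "- x / y \<in> K" using xyz by (simp_all add: K_div K_uminus)
      ultimately show False using a2 by simp
    qed
    show ?thesis using eq y z by simp
  qed
  define T where "T = (\<lambda>(x, y, z). x * 1 + y * a2 + z * (a3::'a))"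
  have inj: "inj_on T (K \<times> K \<times> K)"
  proof (rule inj_onI)
    fix u v assume u: "u \<in> K \<times> K \<times> K" and v: "v \<in> K \<times> K \<times> K" and e: "T u = T v"
    obtain x y z where uu: "u = (x, y, z)" by (cases u) auto
    obtain x' y' z' where vv: "v = (x', y', z')" by (cases v) auto
    have "(x - x') * 1 + (y - y') * a2 + (z - z') * a3 = 0"
      using e unfolding uu vv T_def by (simp add: algebra_simps)
    moreover have "x - x' \<in> K" "y - y' \<in> K" "z - z' \<in> K" using u v uu vv by (simp_all add: K_minus)
    ultimately have "x - x' = 0 \<and> y - y' = 0 \<and> z - z' = 0" using indep by blast
    thus "u = v" using uu vv by simp
  qed
  have "card (T ` (K \<times> K \<times> K)) = q * (q * q)" using card_image[OF inj] cK by (simp add: card_cartesian_product)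
  hence "card (T ` (K \<times> K \<times> K)) = card (UNIV :: 'a set)" using cardF by (simp add: power3_eq_cube)
  hence surj: "T ` (K \<times> K \<times> K) = UNIV" by (intro card_eq_UNIV_imp_eq_UNIV) simp_all
  have span: "\<exists>x1\<in>K. \<exists>x2\<in>K. \<exists>x3\<in>K. a = x1 * 1 + x2 * a2 + x3 * a3" for a
  proof -
    have "a \<in> T ` (K \<times> K \<times> K)" using surj by simp
    then obtain x y z where "x \<in> K" "y \<in> K" "z \<in> K" "a = T (x, y, z)" by auto
    thus ?thesis unfolding T_def by auto
  qed
  show ?thesis using indep span by blast
qed

lemma phi_comb:
  assumes "x1 \<in> K" "x2 \<in> K" "x3 \<in> K"
  shows "phi q l w (x1 * a1 + x2 * a2 + x3 * a3) = x1 * phi q l w a1 + x2 * phi q l w a2 + x3 * phi q l w a3"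
  using assms unfolding subfield_def by (simp add: phi_add phi_scale)

lemma phi_zero: "phi q l w (0::'a) = 0"
  using q_ge3 by (simp add: phi_def)

lemma planeF_sigma: "sigma_plane q (planeF q l (w::'a))"
proof -
  obtain a2 a3 :: 'a where
    ind: "\<forall>x1\<in>K. \<forall>x2\<in>K. \<forall>x3\<in>K. x1 * 1 + x2 * a2 + x3 * a3 = 0 \<longrightarrow> x1 = 0 \<and> x2 = 0 \<and> x3 = 0" and
    sp: "\<forall>a. \<exists>x1\<in>K. \<exists>x2\<in>K. \<exists>x3\<in>K. a = x1 * 1 + x2 * a2 + x3 * a3"
    using basis by blast
  define f where "f = phi q l w"
  define b1 where "b1 = f 1"
  define b2 where "b2 = f a2"
  define b3 where "b3 = f a3"
  have fc: "f (x1 * 1 + x2 * a2 + x3 * a3) = x1 * b1 + x2 * b2 + x3 * b3" if "x1 \<in> K" "x2 \<in> K" "x3 \<in> K" for x1 x2 x3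
    unfolding f_def b1_def b2_def b3_def by (rule phi_comb[OF that])
  have "planeF q l w = {proj (sigvec q (x1 * 1 + x2 * a2 + x3 * a3) (x1 * b1 + x2 * b2 + x3 * b3)) | x1 x2 x3.
            x1 \<in> K \<and> x2 \<in> K \<and> x3 \<in> K \<and>
            (x1 * 1 + x2 * a2 + x3 * a3, x1 * b1 + x2 * b2 + x3 * b3) \<noteq> (0, 0)}" (is "_ = ?R")
  proof
    show "planeF q l w \<subseteq> ?R"
    proof
      fix X assume "X \<in> planeF q l w"
      then obtain a where a: "a \<noteq> 0" "X = proj (sigvec q a (f a))" unfolding in_planeF f_def by blast
      obtain x1 x2 x3 where x: "x1 \<in> K" "x2 \<in> K" "x3 \<in> K" "a = x1 * 1 + x2 * a2 + x3 * a3" using sp by blast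
      have "X = proj (sigvec q (x1 * 1 + x2 * a2 + x3 * a3) (x1 * b1 + x2 * b2 + x3 * b3))"
        using a(2) x fc by simp
      moreover have "(x1 * 1 + x2 * a2 + x3 * a3, x1 * b1 + x2 * b2 + x3 * b3) \<noteq> (0, 0)" using a(1) x(4) by simp
      ultimately show "X \<in> ?R" using x(1-3) by blast
    qed
    show "?R \<subseteq> planeF q l w"
    proof
      fix X assume "X \<in> ?R"
      then obtain x1 x2 x3 where x: "x1 \<in> K" "x2 \<in> K" "x3 \<in> K"
        "(x1 * 1 + x2 * a2 + x3 * a3, x1 * b1 + x2 * b2 + x3 * b3) \<noteq> (0, 0)"
        "X = proj (sigvec q (x1 * 1 + x2 * a2 + x3 * a3) (x1 * b1 + x2 * b2 + x3 * b3))" by blast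
      define a where "a = x1 * 1 + x2 * a2 + x3 * a3"
      have fa: "x1 * b1 + x2 * b2 + x3 * b3 = f a" unfolding a_def using fc x(1-3) by simp
      have anz: "a \<noteq> 0"
      proof
        assume "a = 0"
        hence "f a = 0" unfolding f_def using phi_zero by simp
        thus False using x(4) fa \<open>a = 0\<close> unfolding a_def by simp
      qed
      have "X = proj (sigvec q a (phi q l w a))" using x(5) fa unfolding a_def f_def by simp
      thus "X \<in> planeF q l w" unfolding in_planeF using anz by blast
    qed
  qed
  moreover have "\<forall>x1\<in>K. \<forall>x2\<in>K. \<forall>x3\<in>K.
        x1 * 1 + x2 * a2 + x3 * a3 = 0 \<and> x1 * b1 + x2 * b2 + x3 * b3 = 0
        \<longrightarrow> x1 = 0 \<and> x2 = 0 \<and> x3 = 0" using ind by blast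
  ultimately show ?thesis unfolding sigma_plane_def by blast
qed

lemma point_in_plane:
  assumes "a \<noteq> 0" "proj (sigvec q a (phi q l w a)) \<in> planeF q m (v::'a)"
  shows "phi q l w a = phi q m v a"
proof -
  obtain a' where a': "a' \<noteq> 0" "proj (sigvec q a (phi q l w a)) = proj (sigvec q a' (phi q m v a'))"
    using assms(2) in_planeF by blast
  obtain c where c: "c \<noteq> 0" "c ^ q = c" "a' = c * a" "phi q m v a' = c * phi q l w a"
    using point_eq[OF assms(1), of a' "phi q m v a'"] a' by metis
  have "c * phi q m v a = c * phi q l w a" using c phi_scale by metis
  thus ?thesis using c(1) by simp
qed

lemma planeF_inj:
  assumes l: "l \<in> Lam" and m: "m \<in> Lam" and w: "w \<noteq> 0" and v: "v \<noteq> 0"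
    and eq: "planeF q l w = planeF q m (v::'a)"
  shows "l = m \<and> w = v"
proof -
  define \<alpha> where "\<alpha> = (w*l - v*m)/2"
  define \<beta> where "\<beta> = (w/l - v/m)/2"
  have D0: "\<alpha> * x + \<beta> * x^q = 0" for x :: 'a
  proof (cases "x = 0")
    case True thus ?thesis using q_ge3 by simp
  next
    case False
    have "proj (sigvec q x (phi q l w x)) \<in> planeF q l w" by (rule mem_planeF[OF False])
    hence "proj (sigvec q x (phi q l w x)) \<in> planeF q m v" unfolding eq .
    hence "phi q l w x = phi q m v x" by (rule point_in_plane[OF False])
    thus ?thesis using phi_diff[of l w x m v] unfolding \<alpha>_def \<beta>_def by simp
  qed
  have ab: "\<alpha> + \<beta> = 0" using D0[of 1] by simp
  have a0: "\<alpha> = 0"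
  proof (rule ccontr)
    assume an: "\<alpha> \<noteq> 0"
    have "x ^ q = x" for x :: 'a
    proof -
      have bm: "\<beta> = - \<alpha>" using ab by (simp only: add_eq_0_iff)
      have "\<alpha> * (x - x^q) = \<alpha> * x + \<beta> * x^q" using bm by (simp add: algebra_simps)
      also have "... = 0" by (rule D0)
      finally have "\<alpha> * (x - x^q) = 0" .
      thus ?thesis using an by simp
    qed
    hence "K = UNIV" unfolding subfield_def by auto
    hence "q = q^3" using card_Lam_and_K cardF by simp
    thus False using q_ge3 by (simp add: power3_eq_cube)
  qed
  hence b0: "\<beta> = 0" using ab by simp
  have lnz: "l \<noteq> 0" "m \<noteq> 0" using l m Lam_nz by auto
  have e1: "w * l = v * m" using a0 two_nz unfolding \<alpha>_def by simp
  have e2: "w / l = v / m" using b0 two_nz unfolding \<beta>_def by simp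
  have "w * m = v * l" using e2 lnz by (simp add: field_simps)
  hence "w * l * m = v * l * l" by (metis mult.commute mult.left_commute)
  hence "v * m * m = v * l * l" using e1 by simp
  hence sq: "m * m = l * l" using v by simp
  have "l = m"
  proof (rule ccontr)
    assume "l \<noteq> m"
    have "(l - m) * (l + m) = l * l - m * m" by (simp add: algebra_simps)
    hence "(l - m) * (l + m) = 0" using sq by simp
    moreover have "l - m \<noteq> 0" using \<open>l \<noteq> m\<close> by simp
    ultimately have "l + m = 0" by simp
    hence "l = - m" by (simp only: add_eq_0_iff2)
    hence "l / m = -1" using lnz by simp
    moreover have "(l / m) ^ (q^2 + q + 1) = 1" using Lam_norm Lam_div l m by blast
    moreover have "odd (q^2 + q + 1)" using oddq by simp
    ultimately have "(-1::'a) = 1" by simp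
    hence "(2::'a) = 0" by (simp add: eq_neg_iff_add_eq_0)
    thus False using two_nz by simp
  qed
  thus ?thesis using e1 lnz by simp
qed

end
theorem theorem4p2:
  fixes q :: nat
  assumes "card (UNIV :: 'a set) = q ^ 3"
    and "odd q"
    and "\<exists>p k. prime p \<and> k > 0 \<and> q = p ^ k"
  shows "(\<forall>P \<in> (codeC q :: ('a::{field,finite}) point set set). sigma_plane q P)
       \<and> card (codeC q :: 'a point set set) = (q^3 - 1) * (q^2 + q + 1)
       \<and> (\<forall>P1 \<in> (codeC q :: 'a point set set). \<forall>P2 \<in> codeC q.
            P1 \<noteq> P2 \<longrightarrow> card (P1 \<inter> P2) \<le> 1)"
proof -
  interpret ctx q "TYPE('a)" using assms by unfold_locales
  let ?f = "\<lambda>(l, w). planeF q l (w::'a)"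
  let ?W = "{w::'a. w \<noteq> 0}"
  have C: "codeC q = ?f ` (Lam \<times> ?W)" by (rule codeC_eq)
  have inj: "inj_on ?f (Lam \<times> ?W)"
  proof (rule inj_onI)
    fix u v assume u: "u \<in> Lam \<times> ?W" and v: "v \<in> Lam \<times> ?W" and e: "?f u = ?f v"
    obtain l w where uu: "u = (l, w)" by (cases u) auto
    obtain m x where vv: "v = (m, x)" by (cases v) auto
    have "l = m \<and> w = x" using planeF_inj[of l m w x] u v e unfolding uu vv by simp
    thus "u = v" unfolding uu vv by simp
  qed
  have cW: "card ?W = q^3 - 1"
  proof -
    have "?W = UNIV - {0}" by auto
    thus ?thesis using assms(1) by (simp add: card_Diff_singleton)
  qed
  have "card (codeC q :: 'a point set set) = card (Lam \<times> ?W)" unfolding C by (rule card_image[OF inj])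
  also have "... = (q^2 + q + 1) * (q^3 - 1)" using card_Lam_and_K cW by (simp add: card_cartesian_product)
  finally have card: "card (codeC q :: 'a point set set) = (q^3 - 1) * (q^2 + q + 1)" by (simp add: mult.commute)
  have sig: "\<forall>P \<in> (codeC q :: 'a point set set). sigma_plane q P"
    unfolding C using planeF_sigma by auto
  have int: "\<forall>P1 \<in> (codeC q :: 'a point set set). \<forall>P2 \<in> codeC q. P1 \<noteq> P2 \<longrightarrow> card (P1 \<inter> P2) \<le> 1"
    unfolding C using inter_le1 by auto
  show ?thesis using sig card int by blast
qed

end
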